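(* Let $X$ be a nonsingular projective toric variety and $\beta\in H_2(X,\mathbb{Z})$. If the toric divisors $D$ with $\int_\beta D<0$ have nonempty common intersection, then $\beta$ is a linear combination, with nonnegative integer coefficients, of primitive curve classes.
   Context: $X$ has fan $\Delta$ in $N_{\mathbb R}$; each toric divisor $D$ corresponds to a ray generator $\rho\in N$, and toric divisors have nonempty common intersection iff their ray generators span a cone of $\Delta$ (the empty family has intersection $X$). A primitive set is a set $\{D_1,\ldots,D_k\}$ of toric divisors with empty intersection such that every proper subset has nonempty intersection. Then $\rho_1+\cdots+\rho_k$ lies in the relative interior of a unique cone $\langle\rho'_1,\ldots,\rho'_r\rangle\in\Delta$, with $\rho_1+\cdots+\rho_k=a_1\rho'_1+\cdots+a_r\rho'_r$, $a_i>0$. The associated primitive curve class is the unique $\beta\in H_2(X,\mathbb{Z})$ with $\int_\beta D_i=1$ for $i\le k$, $\int_\beta D'_j=-a_j$ for $j\le r$, and $\int_\beta D=0$ for all other toric divisors. *)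

theory Defs
  imports "HOL-Analysis.Analysis"
begin

text \<open>Lattice N = int^'n; a fan is given by its finite set of ray generators
  (primitive lattice vectors) and its set of cones, each cone being the set of
  ray generators spanning it (smooth cones are simplicial).\<close>

definition rv :: "int^'n \<Rightarrow> real^'n" where
  "rv v = (\<chi> i. real_of_int (v $ i))"

definition poscone :: "(int^'n) set \<Rightarrow> (real^'n) set" where
  "poscone S = {x. \<exists>c. (\<forall>v\<in>S. c v \<ge> 0) \<and> x = (\<Sum>v\<in>S. c v *\<^sub>R rv v)}"

definition smooth_projective_fan :: "(int^'n) set \<Rightarrow> (int^'n) set set \<Rightarrow> bool" where
  "smooth_projective_fan rays cones \<longleftrightarrow>
     finite rays \<and> (\<forall>\<sigma>\<in>cones. \<sigma> \<subseteq> rays) \<and>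
     {} \<in> cones \<and> (\<forall>\<sigma>\<in>cones. \<forall>\<tau>. \<tau> \<subseteq> \<sigma> \<longrightarrow> \<tau> \<in> cones) \<and>
     (\<forall>\<rho>\<in>rays. {\<rho>} \<in> cones) \<and>
     \<comment> \<open>nonsingular: generators of each cone extend to a Z-basis of N\<close>
     (\<forall>\<sigma>\<in>cones. \<exists>B. \<sigma> \<subseteq> B \<and> card B = CARD('n) \<and>
         (\<forall>w::int^'n. \<exists>c. w = (\<Sum>b\<in>B. c b *s b))) \<and>
     \<comment> \<open>fan: cones meet along common faces\<close>
     (\<forall>\<sigma>\<in>cones. \<forall>\<tau>\<in>cones. poscone \<sigma> \<inter> poscone \<tau> = poscone (\<sigma> \<inter> \<tau>)) \<and>
     \<comment> \<open>complete\<close>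
     (\<Union>\<sigma>\<in>cones. poscone \<sigma>) = UNIV \<and>
     \<comment> \<open>projective: strictly convex piecewise linear support function\<close>
     (\<exists>h :: int^'n \<Rightarrow> real. \<forall>\<sigma>\<in>cones. card \<sigma> = CARD('n) \<longrightarrow>
         (\<exists>m :: real^'n. (\<forall>v\<in>\<sigma>. m \<bullet> rv v = h v) \<and> (\<forall>v\<in>rays - \<sigma>. m \<bullet> rv v < h v)))"

text \<open>H_2(X,Z) is identified with integer linear relations among the ray
  generators: beta corresponds to (\<integral>_beta D_rho)_rho.\<close>
definition curve_class :: "(int^'n) set \<Rightarrow> (int^'n \<Rightarrow> int) \<Rightarrow> bool" where
  "curve_class rays \<beta> \<longleftrightarrow> (\<forall>v. v \<notin> rays \<longrightarrow> \<beta> v = 0) \<and>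
     (\<Sum>\<rho>\<in>rays. \<beta> \<rho> *s \<rho>) = 0"

definition primitive_set :: "(int^'n) set \<Rightarrow> (int^'n) set set \<Rightarrow> (int^'n) set \<Rightarrow> bool" where
  "primitive_set rays cones P \<longleftrightarrow> P \<subseteq> rays \<and> P \<notin> cones \<and> (\<forall>Q. Q \<subset> P \<longrightarrow> Q \<in> cones)"

definition primitive_class ::
    "(int^'n) set \<Rightarrow> (int^'n) set set \<Rightarrow> (int^'n) set \<Rightarrow> (int^'n \<Rightarrow> int) \<Rightarrow> bool" where
  "primitive_class rays cones P \<beta> \<longleftrightarrow>
     primitive_set rays cones P \<and> curve_class rays \<beta> \<and>
     (\<exists>\<tau>\<in>cones. \<exists>a :: int^'n \<Rightarrow> real. (\<forall>v\<in>\<tau>. a v > 0) \<and>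
        rv (\<Sum>v\<in>P. v) = (\<Sum>v\<in>\<tau>. a v *\<^sub>R rv v) \<and>
        (\<forall>v\<in>P. \<beta> v = 1) \<and> (\<forall>v\<in>\<tau>. real_of_int (\<beta> v) = - a v) \<and>
        (\<forall>v\<in>rays - P - \<tau>. \<beta> v = 0))"

end

theory Submission
  imports Defs
begin

lemma rv_add: "rv (a + b) = rv a + rv b"
  by (simp add: rv_def vec_eq_iff)

lemma rv_diff: "rv (a - b) = rv a - rv b"
  by (simp add: rv_def vec_eq_iff)

lemma rv_smult: "rv (c *s v) = real_of_int c *\<^sub>R rv v"
  by (simp add: rv_def vec_eq_iff)

lemma rv_zero[simp]: "rv 0 = 0"
  by (simp add: rv_def vec_eq_iff)

lemma rv_sum: "rv (\<Sum>x\<in>S. f x) = (\<Sum>x\<in>S. rv (f x))"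
  by (simp add: rv_def vec_eq_iff)

lemma rv_inj: "rv a = rv b \<Longrightarrow> a = b"
  by (simp add: rv_def vec_eq_iff)

lemma rv_lincomb: "rv (\<Sum>x\<in>S. c x *s x) = (\<Sum>x\<in>S. real_of_int (c x) *\<^sub>R rv x)"
  by (simp add: rv_sum rv_smult)

lemma rv_axis: "rv (axis i (1::int)) = axis i (1::real)"
  by (simp add: rv_def vec_eq_iff axis_def)

lemma cone_basis:
  assumes spf: "smooth_projective_fan rays cones" and s: "\<sigma> \<in> cones"
  shows "\<exists>B. \<sigma> \<subseteq> B \<and> finite B \<and> card B = CARD('n) \<and>
     (\<forall>w::int^'n. \<exists>c. w = (\<Sum>b\<in>B. c b *s b)) \<and>
     (\<forall>f. (\<Sum>b\<in>B. f b *\<^sub>R rv b) = 0 \<longrightarrow> (\<forall>b\<in>B. f b = 0))"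
proof -
  obtain B where B: "\<sigma> \<subseteq> B" "card B = CARD('n)" "\<forall>w::int^'n. \<exists>c. w = (\<Sum>b\<in>B. c b *s b)"
    using spf s unfolding smooth_projective_fan_def by metis
  have fB: "finite B" by (metis B(2) card.infinite less_not_refl zero_less_card_finite)
  have rvspan: "rv w \<in> span (rv ` B)" for w :: "int^'n"
  proof -
    obtain c where "w = (\<Sum>b\<in>B. c b *s b)" using B(3) by blast
    then have "rv w = (\<Sum>b\<in>B. real_of_int (c b) *\<^sub>R rv b)" by (simp add: rv_lincomb)
    then show ?thesis by (simp add: span_sum span_scale span_base)
  qed
  have "Basis \<subseteq> span (rv ` B)"
  proof
    fix x :: "real^'n" assume "x \<in> Basis"
    then obtain i where "x = axis i 1" using axis_inverse by blast
    then show "x \<in> span (rv ` B)" using rvspan[of "axis i 1"] by (simp add: rv_axis)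
  qed
  then have "span Basis \<subseteq> span (rv ` B)"
    by (metis span_mono span_span)
  then have sp: "UNIV \<subseteq> span (rv ` B)" by simp
  have injrv: "inj_on rv B" by (meson inj_onI rv_inj)
  have ind: "independent (rv ` B)"
    apply (rule card_le_dim_spanning[of _ UNIV])
    using sp fB B(2) by (auto simp: card_image[OF injrv])
  have zero: "\<forall>b\<in>B. f b = 0" if h: "(\<Sum>b\<in>B. f b *\<^sub>R rv b) = 0" for f
  proof -
    define g where "g y = f (inv_into B rv y)" for y
    have "(\<Sum>y\<in>rv ` B. g y *\<^sub>R y) = (\<Sum>b\<in>B. g (rv b) *\<^sub>R rv b)"
      by (rule sum.reindex[OF injrv, unfolded comp_def])
    also have "\<dots> = (\<Sum>b\<in>B. f b *\<^sub>R rv b)"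
      by (rule sum.cong) (auto simp: g_def inv_into_f_f[OF injrv])
    finally have "(\<Sum>y\<in>rv ` B. g y *\<^sub>R y) = 0" using h by simp
    moreover have "\<forall>c. (\<Sum>v\<in>rv ` B. c v *\<^sub>R v) = 0 \<longrightarrow> (\<forall>v\<in>rv ` B. c v = 0)"
      using ind unfolding independent_explicit by (elim conjE)
    ultimately have "\<forall>y\<in>rv ` B. g y = 0" by blast
    then show ?thesis by (auto simp: g_def inv_into_f_f[OF injrv])
  qed
  show ?thesis using B fB zero by blast
qed

lemma ext_sum:
  assumes "finite A" "S \<subseteq> A"
  shows "(\<Sum>b\<in>A. (if b \<in> S then f b else 0) *\<^sub>R (v b :: real^'n)) = (\<Sum>b\<in>S. f b *\<^sub>R v b)"
proof -
  have "(\<Sum>b\<in>A. (if b \<in> S then f b else 0) *\<^sub>R v b) = (\<Sum>b\<in>A. if b \<in> S then f b *\<^sub>R v b else 0)"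
    by (rule sum.cong) auto
  also have "\<dots> = (\<Sum>b\<in>A \<inter> S. f b *\<^sub>R v b)" using assms(1) by (simp add: sum.inter_restrict)
  also have "A \<inter> S = S" using assms(2) by blast
  finally show ?thesis .
qed

lemma spf_facts:
  assumes "smooth_projective_fan rays cones"
  shows "finite rays" "\<And>\<sigma>. \<sigma> \<in> cones \<Longrightarrow> \<sigma> \<subseteq> rays" "{} \<in> cones"
    "\<And>\<sigma> \<tau>. \<sigma> \<in> cones \<Longrightarrow> \<tau> \<subseteq> \<sigma> \<Longrightarrow> \<tau> \<in> cones"
    "\<And>\<sigma> \<tau>. \<sigma> \<in> cones \<Longrightarrow> \<tau> \<in> cones \<Longrightarrow> poscone \<sigma> \<inter> poscone \<tau> = poscone (\<sigma> \<inter> \<tau>)"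
    "(\<Union>\<sigma>\<in>cones. poscone \<sigma>) = UNIV"
    "\<exists>h :: int^'n \<Rightarrow> real. \<forall>\<sigma>\<in>cones. card \<sigma> = CARD('n) \<longrightarrow>
         (\<exists>m :: real^'n. (\<forall>v\<in>\<sigma>. m \<bullet> rv v = h v) \<and> (\<forall>v\<in>rays - \<sigma>. m \<bullet> rv v < h v))"
proof -
  note d = assms[unfolded smooth_projective_fan_def]
  show "finite rays" using d by (elim conjE)
  show "\<And>\<sigma>. \<sigma> \<in> cones \<Longrightarrow> \<sigma> \<subseteq> rays" using d by (elim conjE) simp
  show "{} \<in> cones" using d by (elim conjE)
  show "\<And>\<sigma> \<tau>. \<sigma> \<in> cones \<Longrightarrow> \<tau> \<subseteq> \<sigma> \<Longrightarrow> \<tau> \<in> cones" using d by (elim conjE) simp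
  show "\<And>\<sigma> \<tau>. \<sigma> \<in> cones \<Longrightarrow> \<tau> \<in> cones \<Longrightarrow> poscone \<sigma> \<inter> poscone \<tau> = poscone (\<sigma> \<inter> \<tau>)"
    using d by (elim conjE) simp
  show "(\<Union>\<sigma>\<in>cones. poscone \<sigma>) = UNIV" using d by (elim conjE)
  show "\<exists>h :: int^'n \<Rightarrow> real. \<forall>\<sigma>\<in>cones. card \<sigma> = CARD('n) \<longrightarrow>
         (\<exists>m :: real^'n. (\<forall>v\<in>\<sigma>. m \<bullet> rv v = h v) \<and> (\<forall>v\<in>rays - \<sigma>. m \<bullet> rv v < h v))"
    using d by (elim conjE)
qed

lemma cone_uniq:
  fixes rays :: "(int^'n) set"
  assumes spf: "smooth_projective_fan rays cones" and s: "\<sigma> \<in> cones"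
    and eq: "(\<Sum>v\<in>\<sigma>. f v *\<^sub>R rv v) = (\<Sum>v\<in>\<sigma>. g v *\<^sub>R rv v)" and v: "v \<in> \<sigma>"
  shows "f v = g v"
proof -
  obtain B where B: "\<sigma> \<subseteq> B" "finite B"
     "\<forall>f. (\<Sum>b\<in>B. f b *\<^sub>R rv b) = 0 \<longrightarrow> (\<forall>b\<in>B. f b = 0)"
    using cone_basis[OF spf s] by blast
  have "(\<Sum>b\<in>B. (if b \<in> \<sigma> then f b - g b else 0) *\<^sub>R rv b) = (\<Sum>b\<in>\<sigma>. (f b - g b) *\<^sub>R rv b)"
    by (rule ext_sum[OF B(2,1)])
  also have "\<dots> = 0" using eq by (simp add: scaleR_diff_left sum_subtractf)
  finally have z: "(\<Sum>b\<in>B. (if b \<in> \<sigma> then f b - g b else 0) *\<^sub>R rv b) = 0" .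
  have "\<forall>b\<in>B. (if b \<in> \<sigma> then f b - g b else 0) = 0" using B(3)[rule_format, OF z] by blast
  then show ?thesis using v B(1) by force
qed

lemma cone_int:
  fixes x :: "int^'n"
  assumes spf: "smooth_projective_fan rays cones" and s: "\<sigma> \<in> cones"
    and eq: "rv x = (\<Sum>v\<in>\<sigma>. a v *\<^sub>R rv v)" and v: "v \<in> \<sigma>"
  shows "\<exists>n. a v = real_of_int n"
proof -
  obtain B where B: "\<sigma> \<subseteq> B" "finite B" "\<forall>w::int^'n. \<exists>c. w = (\<Sum>b\<in>B. c b *s b)"
     "\<forall>f. (\<Sum>b\<in>B. f b *\<^sub>R rv b) = 0 \<longrightarrow> (\<forall>b\<in>B. f b = 0)"
    using cone_basis[OF spf s] by blast
  obtain c where c: "x = (\<Sum>b\<in>B. c b *s b)" using B(3) by blast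
  have "(\<Sum>b\<in>B. ((if b \<in> \<sigma> then a b else 0) - real_of_int (c b)) *\<^sub>R rv b)
      = (\<Sum>b\<in>B. (if b \<in> \<sigma> then a b else 0) *\<^sub>R rv b) - (\<Sum>b\<in>B. real_of_int (c b) *\<^sub>R rv b)"
    by (simp add: scaleR_diff_left sum_subtractf)
  also have "\<dots> = rv x - rv x"
    using ext_sum[OF B(2,1), of a rv] eq c by (simp add: rv_lincomb)
  finally have z: "(\<Sum>b\<in>B. ((if b \<in> \<sigma> then a b else 0) - real_of_int (c b)) *\<^sub>R rv b) = 0" by simp
  have "\<forall>b\<in>B. ((if b \<in> \<sigma> then a b else 0) - real_of_int (c b)) = 0" using B(4)[rule_format, OF z] by blast
  then have "a v = real_of_int (c v)" using v B(1) by force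
  then show ?thesis by blast
qed

lemma poscone_hull_sub:
  assumes "finite S" "\<forall>v\<in>S. c v \<ge> 0" "rv ` S \<subseteq> T"
  shows "(\<Sum>v\<in>S. c v *\<^sub>R rv v) \<in> convex_cone hull T"
  using assms
proof (induction S rule: finite_induct)
  case empty
  then show ?case by (simp add: convex_cone_hull_contains_0)
next
  case (insert x F)
  have "c x *\<^sub>R rv x \<in> convex_cone hull T"
    using insert by (intro convex_cone_hull_mul) (auto intro: hull_inc)
  moreover have "(\<Sum>v\<in>F. c v *\<^sub>R rv v) \<in> convex_cone hull T" using insert by auto
  ultimately show ?case using insert by (simp add: convex_cone_hull_add)
qed

lemma poscone_mem: 
  assumes "finite S" "v \<in> S" shows "rv v \<in> poscone S"
proof -
  have e: "(\<lambda>va. (if va = v then 1 else 0) *\<^sub>R rv va) = (\<lambda>va. if va = v then rv va else 0)" by auto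
  have "rv v = (\<Sum>u\<in>S. (if u = v then 1 else 0) *\<^sub>R rv u)"
    unfolding e using assms by (simp add: sum.delta')
  then show ?thesis unfolding poscone_def
    by (intro CollectI exI[of _ "\<lambda>u. if u = v then 1 else 0"]) auto
qed

lemma convex_cone_poscone: "convex_cone (poscone S)"
  unfolding convex_cone_iff
proof (intro conjI ballI allI impI)
  show "0 \<in> poscone S" unfolding poscone_def by (rule CollectI, rule exI[of _ "\<lambda>_. 0"]) simp
next
  fix x y assume "x \<in> poscone S" "y \<in> poscone S"
  then obtain c d where "\<forall>v\<in>S. c v \<ge> 0" "x = (\<Sum>v\<in>S. c v *\<^sub>R rv v)"
    "\<forall>v\<in>S. d v \<ge> 0" "y = (\<Sum>v\<in>S. d v *\<^sub>R rv v)" unfolding poscone_def by blast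
  then show "x + y \<in> poscone S" unfolding poscone_def
    by (intro CollectI exI[of _ "\<lambda>v. c v + d v"]) (simp add: scaleR_add_left sum.distrib)
next
  fix x and e :: real assume "x \<in> poscone S" "e \<ge> 0"
  then obtain c where "\<forall>v\<in>S. c v \<ge> 0" "x = (\<Sum>v\<in>S. c v *\<^sub>R rv v)" unfolding poscone_def by blast
  then show "e *\<^sub>R x \<in> poscone S" unfolding poscone_def using \<open>e \<ge> 0\<close>
    by (intro CollectI exI[of _ "\<lambda>v. e * c v"]) (simp add: scaleR_sum_right)
qed

lemma poscone_hull: "finite S \<Longrightarrow> poscone S = convex_cone hull (rv ` S)"
proof
  assume f: "finite S"
  show "poscone S \<subseteq> convex_cone hull (rv ` S)"
    using poscone_hull_sub[OF f] unfolding poscone_def by blast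
  show "convex_cone hull (rv ` S) \<subseteq> poscone S"
    by (rule hull_minimal) (use f poscone_mem convex_cone_poscone in auto)
qed

lemma closed_poscone: "finite S \<Longrightarrow> closed (poscone S)"
  by (simp add: poscone_hull closed_convex_cone_hull)

lemma poscone_span: "poscone S \<subseteq> span (rv ` S)"
proof
  fix x assume "x \<in> poscone S"
  then obtain c where x: "x = (\<Sum>v\<in>S. c v *\<^sub>R rv v)" unfolding poscone_def by blast
  have "c v *\<^sub>R rv v \<in> span (rv ` S)" if "v \<in> S" for v
    using that by (intro span_scale span_base) auto
  then show "x \<in> span (rv ` S)" unfolding x by (rule span_sum)
qed

lemma sum_if_sub:
  assumes "finite A" "S \<subseteq> A"
  shows "(\<Sum>x\<in>A. if x \<in> S then f x else 0) = (sum f S :: 'b::comm_monoid_add)"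
proof -
  have "(\<Sum>x\<in>A. if x \<in> S then f x else 0) = sum f (A \<inter> S)" using assms(1) by (simp add: sum.inter_restrict)
  also have "A \<inter> S = S" using assms(2) by blast
  finally show ?thesis .
qed

lemma max_cone:
  fixes rays :: "(int^'n) set"
  assumes spf: "smooth_projective_fan rays cones" and s: "\<sigma> \<in> cones"
  shows "\<exists>\<sigma>'\<in>cones. \<sigma> \<subseteq> \<sigma>' \<and> card \<sigma>' = CARD('n)"
proof -
  note F = spf_facts[OF spf]
  have "cones \<subseteq> Pow rays" using F(2) by blast
  then have fc: "finite cones" using F(1) finite_subset by blast
  let ?M = "{\<tau>\<in>cones. \<sigma> \<subseteq> \<tau>}"
  have "finite ?M" "?M \<noteq> {}" using fc s by auto
  then obtain \<sigma>'' where m: "\<sigma>'' \<in> ?M" "\<forall>b\<in>?M. \<sigma>'' \<le> b \<longrightarrow> \<sigma>'' = b"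
    using finite_has_maximal by blast
  have cs: "\<sigma>'' \<in> cones" "\<sigma> \<subseteq> \<sigma>''" using m(1) by auto
  have fs: "finite \<sigma>''" using F(1) F(2)[OF cs(1)] finite_subset by blast
  define x where "x = (\<Sum>v\<in>\<sigma>''. (1::real) *\<^sub>R rv v)"
  have xin: "x \<in> poscone \<sigma>''" unfolding poscone_def x_def
    by (intro CollectI exI[of _ "\<lambda>_. 1"]) simp
  have only: "\<tau> = \<sigma>''" if t: "\<tau> \<in> cones" "x \<in> poscone \<tau>" for \<tau>
  proof -
    have "x \<in> poscone (\<sigma>'' \<inter> \<tau>)" using F(5)[OF cs(1) t(1)] xin t(2) by blast
    then obtain e where e: "x = (\<Sum>v\<in>\<sigma>'' \<inter> \<tau>. e v *\<^sub>R rv v)" unfolding poscone_def by blast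
    have "(\<Sum>v\<in>\<sigma>''. (if v \<in> \<sigma>'' \<inter> \<tau> then e v else 0) *\<^sub>R rv v) = (\<Sum>v\<in>\<sigma>'' \<inter> \<tau>. e v *\<^sub>R rv v)"
      by (rule ext_sum[OF fs]) auto
    hence eq: "(\<Sum>v\<in>\<sigma>''. (1::real) *\<^sub>R rv v) = (\<Sum>v\<in>\<sigma>''. (if v \<in> \<sigma>'' \<inter> \<tau> then e v else 0) *\<^sub>R rv v)"
      using e x_def by simp
    have sub: "\<sigma>'' \<subseteq> \<tau>"
    proof
      fix v assume v: "v \<in> \<sigma>''"
      from cone_uniq[OF spf cs(1) eq v] show "v \<in> \<tau>" by (auto split: if_splits)
    qed
    then show ?thesis using m(2) t(1) cs(2) by blast
  qed
  define Fs where "Fs = \<Union>(poscone ` {\<tau>\<in>cones. \<tau> \<noteq> \<sigma>''})"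
  have "closed Fs" unfolding Fs_def
  proof (intro closed_Union ballI)
    show "finite (poscone ` {\<tau> \<in> cones. \<tau> \<noteq> \<sigma>''})" using fc by simp
    fix T assume "T \<in> poscone ` {\<tau> \<in> cones. \<tau> \<noteq> \<sigma>''}"
    then obtain \<tau> where "\<tau> \<in> cones" "T = poscone \<tau>" by blast
    moreover have "finite \<tau>" using F(1) F(2)[OF \<open>\<tau> \<in> cones\<close>] by (rule finite_subset[rotated])
    ultimately show "closed T" using closed_poscone by simp
  qed
  moreover have "x \<notin> Fs"
  proof
    assume "x \<in> Fs"
    then obtain \<tau> where "\<tau> \<in> cones" "\<tau> \<noteq> \<sigma>''" "x \<in> poscone \<tau>" unfolding Fs_def by blast
    then show False using only by blast
  qed
  ultimately have "open (- Fs)" "x \<in> - Fs" by auto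
  then obtain r where r: "r > 0" "ball x r \<subseteq> - Fs"
    using open_contains_ball by blast
  have ballsub: "ball x r \<subseteq> span (rv ` \<sigma>'')"
  proof
    fix y assume y: "y \<in> ball x r"
    have "y \<in> (\<Union>\<sigma>\<in>cones. poscone \<sigma>)" using F(6) by simp
    then obtain \<tau> where t: "\<tau> \<in> cones" "y \<in> poscone \<tau>" by blast
    have "\<tau> = \<sigma>''"
    proof (rule ccontr)
      assume "\<tau> \<noteq> \<sigma>''"
      then have "y \<in> Fs" using t unfolding Fs_def by blast
      then show False using y r(2) by blast
    qed
    then show "y \<in> span (rv ` \<sigma>'')" using t poscone_span by blast
  qed
  have xs: "x \<in> span (rv ` \<sigma>'')" using xin poscone_span by blast
  have all: "z \<in> span (rv ` \<sigma>'')" for z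
  proof (cases "z = 0")
    case True then show ?thesis by (simp add: span_zero)
  next
    case False
    define t where "t = r / (2 * norm z)"
    have tpos: "t > 0" using r False by (simp add: t_def)
    have "dist x (x + t *\<^sub>R z) = t * norm z" using tpos by (simp add: dist_norm)
    also have "\<dots> = r / 2" using False by (simp add: t_def)
    finally have "x + t *\<^sub>R z \<in> ball x r" using r by simp
    hence "x + t *\<^sub>R z \<in> span (rv ` \<sigma>'')" using ballsub by blast
    hence "(x + t *\<^sub>R z) - x \<in> span (rv ` \<sigma>'')" using xs span_diff by blast
    hence "t *\<^sub>R z \<in> span (rv ` \<sigma>'')" by simp
    hence "(1 / t) *\<^sub>R (t *\<^sub>R z) \<in> span (rv ` \<sigma>'')" by (rule span_scale)
    thus ?thesis using tpos by simp
  qed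
  have "dim (UNIV::(real^'n) set) \<le> card (rv ` \<sigma>'')" by (rule dim_le_card) (use all fs in auto)
  hence ge: "CARD('n) \<le> card \<sigma>''" using card_image_le[OF fs, of rv] by simp
  obtain B where B: "\<sigma>'' \<subseteq> B" "finite B" "card B = CARD('n)" using cone_basis[OF spf cs(1)] by blast
  have "card \<sigma>'' \<le> CARD('n)" using card_mono[OF B(2,1)] B(3) by simp
  then show ?thesis using ge cs by (intro bexI[of _ \<sigma>'']) auto
qed

lemma prim_exists:
  fixes rays :: "(int^'n) set"
  assumes spf: "smooth_projective_fan rays cones" and P: "primitive_set rays cones P"
  shows "\<exists>c. primitive_class rays cones P c"
proof -
  note F = spf_facts[OF spf]
  have PS: "P \<subseteq> rays" "P \<notin> cones" "\<And>Q. Q \<subset> P \<Longrightarrow> Q \<in> cones"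
    using P unfolding primitive_set_def by auto
  have fP: "finite P" using PS(1) F(1) finite_subset by blast
  define x where "x = (\<Sum>v\<in>P. v)"
  have "rv x \<in> (\<Union>\<sigma>\<in>cones. poscone \<sigma>)" using F(6) by simp
  then obtain \<sigma> where \<sigma>: "\<sigma> \<in> cones" "rv x \<in> poscone \<sigma>" by blast
  then obtain c where c: "\<forall>v\<in>\<sigma>. c v \<ge> 0" "rv x = (\<Sum>v\<in>\<sigma>. c v *\<^sub>R rv v)"
    unfolding poscone_def by blast
  define \<tau> where "\<tau> = {v\<in>\<sigma>. c v > 0}"
  have \<tau>c: "\<tau> \<in> cones" unfolding \<tau>_def by (rule F(4)[OF \<sigma>(1)]) auto
  have f\<sigma>: "finite \<sigma>" using F(1) F(2)[OF \<sigma>(1)] finite_subset by blast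
  have f\<tau>: "finite \<tau>" using f\<sigma> \<tau>_def by simp
  have \<tau>rays: "\<tau> \<subseteq> rays" using F(2)[OF \<tau>c] .
  have x\<tau>: "rv x = (\<Sum>v\<in>\<tau>. c v *\<^sub>R rv v)"
  proof -
    have "(\<Sum>v\<in>\<sigma>. c v *\<^sub>R rv v) = (\<Sum>v\<in>\<tau>. c v *\<^sub>R rv v)"
      by (rule sum.mono_neutral_right[OF f\<sigma>]) (use c(1) in \<open>auto simp: \<tau>_def\<close>)
    then show ?thesis using c(2) by simp
  qed
  have "\<forall>v\<in>\<tau>. \<exists>k. c v = real_of_int k" using cone_int[OF spf \<tau>c x\<tau>] by blast
  then obtain n where cn: "\<And>v. v \<in> \<tau> \<Longrightarrow> c v = real_of_int (n v)" by metis
  have cpos: "c v > 0" if "v \<in> \<tau>" for v using that \<tau>_def by auto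
  have disj: "P \<inter> \<tau> = {}"
  proof (rule ccontr)
    assume "P \<inter> \<tau> \<noteq> {}"
    then obtain v where v: "v \<in> P" "v \<in> \<tau>" by blast
    have "real_of_int (n v) > 0" using cn[OF v(2)] cpos[OF v(2)] by linarith
    then have "n v \<ge> 1" by simp
    then have "real_of_int (n v) \<ge> 1" by simp
    then have c1: "c v \<ge> 1" using cn[OF v(2)] by linarith
    let ?Q = "P - {v}"
    have Qc: "?Q \<in> cones" using PS(3) v(1) by blast
    have fQ: "finite ?Q" using fP by simp
    have "x = v + (\<Sum>u\<in>?Q. u)" unfolding x_def by (rule sum.remove[OF fP v(1)])
    then have xQ: "rv (\<Sum>u\<in>?Q. u) = rv x - rv v" by (simp add: rv_add)
    have dsum: "(\<Sum>u\<in>\<tau>. (if u = v then 1 else 0) *\<^sub>R rv u) = rv v"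
    proof -
      have e: "(\<lambda>u. (if u = v then 1 else 0) *\<^sub>R rv u) = (\<lambda>u. if u = v then rv u else 0)" by auto
      show ?thesis unfolding e using f\<tau> v(2) by (simp add: sum.delta')
    qed
    have eqt: "rv (\<Sum>u\<in>?Q. u) = (\<Sum>u\<in>\<tau>. (c u - (if u = v then 1 else 0)) *\<^sub>R rv u)"
      unfolding xQ x\<tau> using dsum by (simp add: scaleR_diff_left sum_subtractf)
    have "rv (\<Sum>u\<in>?Q. u) \<in> poscone \<tau>" unfolding poscone_def
      apply (intro CollectI exI[of _ "\<lambda>u. c u - (if u = v then 1 else 0)"] conjI eqt)
      using c1 cpos by (auto simp: less_imp_le)
    moreover have qq: "rv (\<Sum>u\<in>?Q. u) = (\<Sum>u\<in>?Q. (1::real) *\<^sub>R rv u)" by (simp add: rv_sum)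
    have "rv (\<Sum>u\<in>?Q. u) \<in> poscone ?Q" unfolding poscone_def
      by (intro CollectI exI[of _ "\<lambda>_. 1"] conjI qq) auto
    ultimately have "rv (\<Sum>u\<in>?Q. u) \<in> poscone (?Q \<inter> \<tau>)" using F(5)[OF Qc \<tau>c] by blast
    then obtain e where e: "rv (\<Sum>u\<in>?Q. u) = (\<Sum>u\<in>?Q \<inter> \<tau>. e u *\<^sub>R rv u)" unfolding poscone_def by blast
    have "(\<Sum>u\<in>?Q. (if u \<in> ?Q \<inter> \<tau> then e u else 0) *\<^sub>R rv u) = (\<Sum>u\<in>?Q \<inter> \<tau>. e u *\<^sub>R rv u)"
      by (rule ext_sum[OF fQ]) auto
    hence eq: "(\<Sum>u\<in>?Q. (1::real) *\<^sub>R rv u) = (\<Sum>u\<in>?Q. (if u \<in> ?Q \<inter> \<tau> then e u else 0) *\<^sub>R rv u)"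
      using e qq by simp
    have "?Q \<subseteq> \<tau>"
    proof
      fix u assume u: "u \<in> ?Q"
      from cone_uniq[OF spf Qc eq u] show "u \<in> \<tau>" by (auto split: if_splits)
    qed
    then have "P \<subseteq> \<tau>" using v by blast
    then have "P \<in> cones" using F(4)[OF \<tau>c] by blast
    then show False using PS(2) by blast
  qed
  define \<beta> where "\<beta> \<rho> = (if \<rho> \<in> P then 1 else if \<rho> \<in> \<tau> then - n \<rho> else 0)" for \<rho>
  have xint: "(\<Sum>\<rho>\<in>\<tau>. n \<rho> *s \<rho>) = x"
  proof (rule rv_inj)
    have "rv (\<Sum>\<rho>\<in>\<tau>. n \<rho> *s \<rho>) = (\<Sum>\<rho>\<in>\<tau>. real_of_int (n \<rho>) *\<^sub>R rv \<rho>)" by (rule rv_lincomb)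
    also have "\<dots> = (\<Sum>\<rho>\<in>\<tau>. c \<rho> *\<^sub>R rv \<rho>)" using cn by (intro sum.cong) auto
    finally show "rv (\<Sum>\<rho>\<in>\<tau>. n \<rho> *s \<rho>) = rv x" using x\<tau> by simp
  qed
  have split: "\<beta> \<rho> *s \<rho> = (if \<rho> \<in> P then \<rho> else 0) + (if \<rho> \<in> \<tau> then - (n \<rho> *s \<rho>) else 0)" for \<rho>
  proof (cases "\<rho> \<in> P")
    case True
    then have "\<rho> \<notin> \<tau>" using disj by blast
    then show ?thesis using True by (simp add: \<beta>_def)
  next
    case False
    then show ?thesis by (cases "\<rho> \<in> \<tau>") (simp_all add: \<beta>_def vec_eq_iff)
  qed
  have "(\<Sum>\<rho>\<in>rays. \<beta> \<rho> *s \<rho>) = (\<Sum>\<rho>\<in>rays. if \<rho> \<in> P then \<rho> else 0) + (\<Sum>\<rho>\<in>rays. if \<rho> \<in> \<tau> then - (n \<rho> *s \<rho>) else 0)"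
    unfolding split by (rule sum.distrib)
  also have "\<dots> = x - (\<Sum>\<rho>\<in>\<tau>. n \<rho> *s \<rho>)"
    using sum_if_sub[OF F(1) PS(1), of "\<lambda>\<rho>. \<rho>"] sum_if_sub[OF F(1) \<tau>rays, of "\<lambda>\<rho>. - (n \<rho> *s \<rho>)"]
    by (simp add: x_def sum_negf)
  also have "\<dots> = 0" using xint by simp
  finally have rel: "(\<Sum>\<rho>\<in>rays. \<beta> \<rho> *s \<rho>) = 0" .
  have cc: "curve_class rays \<beta>" unfolding curve_class_def
    using rel PS(1) \<tau>rays by (auto simp: \<beta>_def)
  have "primitive_class rays cones P \<beta>" unfolding primitive_class_def
  proof (intro conjI P cc bexI[OF _ \<tau>c] exI[of _ c])
    show "\<forall>v\<in>\<tau>. 0 < c v" using cpos by blast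
    show "rv (\<Sum>v\<in>P. v) = (\<Sum>v\<in>\<tau>. c v *\<^sub>R rv v)" using x\<tau> x_def by simp
    show "\<forall>v\<in>P. \<beta> v = 1" by (simp add: \<beta>_def)
    show "\<forall>v\<in>\<tau>. real_of_int (\<beta> v) = - c v" using disj cn by (auto simp: \<beta>_def)
    show "\<forall>v\<in>rays - P - \<tau>. \<beta> v = 0" by (simp add: \<beta>_def)
  qed
  then show ?thesis by blast
qed

lemma deg_inv:
  assumes "curve_class rays \<gamma>"
  shows "(\<Sum>\<rho>\<in>rays. real_of_int (\<gamma> \<rho>) * (m \<bullet> rv \<rho>)) = 0"
proof -
  have "(\<Sum>\<rho>\<in>rays. real_of_int (\<gamma> \<rho>) * (m \<bullet> rv \<rho>)) = m \<bullet> (\<Sum>\<rho>\<in>rays. real_of_int (\<gamma> \<rho>) *\<^sub>R rv \<rho>)"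
    by (simp add: inner_sum_right)
  also have "(\<Sum>\<rho>\<in>rays. real_of_int (\<gamma> \<rho>) *\<^sub>R rv \<rho>) = rv (\<Sum>\<rho>\<in>rays. \<gamma> \<rho> *s \<rho>)"
    by (simp add: rv_lincomb)
  also have "(\<Sum>\<rho>\<in>rays. \<gamma> \<rho> *s \<rho>) = 0" using assms unfolding curve_class_def by blast
  finally show ?thesis by simp
qed

lemma deg_shift:
  assumes "curve_class rays \<gamma>"
  shows "(\<Sum>\<rho>\<in>rays. real_of_int (\<gamma> \<rho>) * (h \<rho> - m \<bullet> rv \<rho>)) = (\<Sum>\<rho>\<in>rays. real_of_int (\<gamma> \<rho>) * h \<rho>)"
proof -
  have "(\<Sum>\<rho>\<in>rays. real_of_int (\<gamma> \<rho>) * (h \<rho> - m \<bullet> rv \<rho>))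
     = (\<Sum>\<rho>\<in>rays. real_of_int (\<gamma> \<rho>) * h \<rho>) - (\<Sum>\<rho>\<in>rays. real_of_int (\<gamma> \<rho>) * (m \<bullet> rv \<rho>))"
    by (simp add: right_diff_distrib sum_subtractf)
  then show ?thesis using deg_inv[OF assms, of m] by simp
qed

theorem proposition2p3:
  fixes rays :: "(int^'n) set" and cones :: "(int^'n) set set" and \<beta> :: "int^'n \<Rightarrow> int"
  assumes "smooth_projective_fan rays cones"
    and "curve_class rays \<beta>"
    and "{\<rho>\<in>rays. \<beta> \<rho> < 0} \<in> cones"
  shows "\<exists>C k. finite C \<and>
           (\<forall>c\<in>C. \<exists>P. primitive_class rays cones P c) \<and>
           \<beta> = (\<lambda>\<rho>. \<Sum>c\<in>C. int (k c) * c \<rho>)"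
proof -
  note spf = assms(1)
  note F = spf_facts[OF spf]
  obtain h where h: "\<forall>\<sigma>\<in>cones. card \<sigma> = CARD('n) \<longrightarrow>
         (\<exists>m :: real^'n. (\<forall>v\<in>\<sigma>. m \<bullet> rv v = h v) \<and> (\<forall>v\<in>rays - \<sigma>. m \<bullet> rv v < h v))"
    using F(7) by blast
  have mcone: "\<exists>m \<sigma>'. \<sigma>' \<in> cones \<and> \<sigma> \<subseteq> \<sigma>' \<and> (\<forall>v\<in>\<sigma>'. m \<bullet> rv v = h v) \<and> (\<forall>v\<in>rays - \<sigma>'. m \<bullet> rv v < h v)"
    if sc: "\<sigma> \<in> cones" for \<sigma>
  proof -
    obtain \<sigma>' where s': "\<sigma>' \<in> cones" "\<sigma> \<subseteq> \<sigma>'" "card \<sigma>' = CARD('n)" using max_cone[OF spf sc] by blast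
    then obtain m where "(\<forall>v\<in>\<sigma>'. m \<bullet> rv v = h v) \<and> (\<forall>v\<in>rays - \<sigma>'. m \<bullet> rv v < h v)" using h by blast
    then show ?thesis using s' by blast
  qed
  have wge: "h \<rho> - m \<bullet> rv \<rho> \<ge> 0"
    if "\<rho> \<in> rays" "\<forall>v\<in>\<sigma>'. m \<bullet> rv v = h v" "\<forall>v\<in>rays - \<sigma>'. m \<bullet> rv v < h v" for \<rho> m \<sigma>'
  proof (cases "\<rho> \<in> \<sigma>'")
    case True then show ?thesis using that by simp
  next
    case False then have "m \<bullet> rv \<rho> < h \<rho>" using that by blast
    then show ?thesis by simp
  qed
  define \<sigma> where "\<sigma> = {\<rho>\<in>rays. \<beta> \<rho> < 0}"
  have \<sigma>c: "\<sigma> \<in> cones" using assms(3) \<sigma>_def by simp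
  obtain m0 \<sigma>0 where m0: "\<sigma>0 \<in> cones" "\<sigma> \<subseteq> \<sigma>0" "\<forall>v\<in>\<sigma>0. m0 \<bullet> rv v = h v" "\<forall>v\<in>rays - \<sigma>0. m0 \<bullet> rv v < h v"
    using mcone[OF \<sigma>c] by blast
  define w where "w \<rho> = h \<rho> - m0 \<bullet> rv \<rho>" for \<rho>
  have w0: "w \<rho> \<ge> 0" if "\<rho> \<in> rays" for \<rho> unfolding w_def using wge[OF that m0(3) m0(4)] .
  have w\<sigma>: "w \<rho> = 0" if "\<rho> \<in> \<sigma>" for \<rho> unfolding w_def using m0(2,3) that by auto
  define D where "D \<gamma> = (\<Sum>\<rho>\<in>rays. real_of_int (\<gamma> \<rho>) * w \<rho>)" for \<gamma> :: "int^'n \<Rightarrow> int"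
  define Cs where "Cs = {P. primitive_set rays cones P}"
  define pc where "pc P = (SOME c. primitive_class rays cones P c)" for P
  define C0 where "C0 = pc ` Cs"
  have "Cs \<subseteq> Pow rays" unfolding Cs_def primitive_set_def by blast
  then have finCs: "finite Cs" using F(1) finite_subset by blast
  then have finC0: "finite C0" unfolding C0_def by simp
  have pcC: "primitive_class rays cones P (pc P)" if "P \<in> Cs" for P
    unfolding pc_def using prim_exists[OF spf] that Cs_def by (metis mem_Collect_eq someI_ex)
  have C0prim: "\<forall>c\<in>C0. \<exists>P. primitive_class rays cones P c" unfolding C0_def using pcC by blast
  have Dpos: "D c > 0" if cC0: "c \<in> C0" for c
  proof -
    obtain P where P: "P \<in> Cs" "c = pc P" using cC0 C0_def by blast
    then have pcl: "primitive_class rays cones P c" using pcC by simp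
    then have ps: "primitive_set rays cones P" and cc: "curve_class rays c"
      unfolding primitive_class_def by blast+
    obtain \<tau> a where ta: "\<tau> \<in> cones" "\<forall>v\<in>\<tau>. a v > 0" "\<forall>v\<in>P. c v = 1"
      "\<forall>v\<in>\<tau>. real_of_int (c v) = - a v" "\<forall>v\<in>rays - P - \<tau>. c v = 0"
      using pcl unfolding primitive_class_def by blast
    obtain m \<sigma>' where ms: "\<sigma>' \<in> cones" "\<tau> \<subseteq> \<sigma>'" "\<forall>v\<in>\<sigma>'. m \<bullet> rv v = h v" "\<forall>v\<in>rays - \<sigma>'. m \<bullet> rv v < h v"
      using mcone[OF ta(1)] by blast
    have "D c = (\<Sum>\<rho>\<in>rays. real_of_int (c \<rho>) * h \<rho>)"
      unfolding D_def w_def by (rule deg_shift[OF cc])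
    also have "\<dots> = (\<Sum>\<rho>\<in>rays. real_of_int (c \<rho>) * (h \<rho> - m \<bullet> rv \<rho>))"
      by (rule deg_shift[OF cc, symmetric])
    finally have Dc: "D c = (\<Sum>\<rho>\<in>rays. real_of_int (c \<rho>) * (h \<rho> - m \<bullet> rv \<rho>))" .
    have PS: "P \<subseteq> rays" "P \<notin> cones" using ps unfolding primitive_set_def by auto
    have "\<not> P \<subseteq> \<sigma>'" using PS(2) F(4)[OF ms(1)] by blast
    then obtain v where v: "v \<in> P" "v \<notin> \<sigma>'" by blast
    have vr: "v \<in> rays" using v PS by blast
    have nonneg: "real_of_int (c \<rho>) * (h \<rho> - m \<bullet> rv \<rho>) \<ge> 0" if r: "\<rho> \<in> rays" for \<rho>
    proof (cases "\<rho> \<in> \<tau>")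
      case True
      then have "h \<rho> - m \<bullet> rv \<rho> = 0" using ms(2,3) by auto
      then show ?thesis by simp
    next
      case False
      have "c \<rho> \<ge> 0"
      proof (cases "\<rho> \<in> P")
        case True then show ?thesis using ta(3) by simp
      next
        case False then show ?thesis using ta(5) r \<open>\<rho> \<notin> \<tau>\<close> by simp
      qed
      moreover have "h \<rho> - m \<bullet> rv \<rho> \<ge> 0" using wge[OF r ms(3) ms(4)] .
      ultimately show ?thesis by simp
    qed
    have "m \<bullet> rv v < h v" using ms(4) vr v(2) by blast
    moreover have "c v = 1" using ta(3) v(1) by blast
    ultimately have pv: "real_of_int (c v) * (h v - m \<bullet> rv v) > 0" by simp
    have "(\<Sum>\<rho>\<in>rays. real_of_int (c \<rho>) * (h \<rho> - m \<bullet> rv \<rho>)) > 0"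
      by (rule sum_pos2[OF F(1) vr]) (use pv nonneg in auto)
    then show ?thesis using Dc by simp
  qed
  define \<delta> where "\<delta> = Min (insert 1 (D ` C0))"
  have \<delta>pos: "\<delta> > 0" unfolding \<delta>_def using finC0 Dpos by (subst Min_gr_iff) auto
  have \<delta>le: "\<delta> \<le> D c" if "c \<in> C0" for c unfolding \<delta>_def using finC0 that by (intro Min_le) auto
  define Q where "Q \<gamma> \<longleftrightarrow> curve_class rays \<gamma> \<and> (\<forall>\<rho>\<in>rays. \<gamma> \<rho> < 0 \<longrightarrow> \<rho> \<in> \<sigma>)" for \<gamma> :: "int^'n \<Rightarrow> int"
  have Dnn: "D \<gamma> \<ge> 0" if "Q \<gamma>" for \<gamma>
    unfolding D_def
  proof (rule sum_nonneg)
    fix \<rho> assume r: "\<rho> \<in> rays"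
    show "real_of_int (\<gamma> \<rho>) * w \<rho> \<ge> 0"
    proof (cases "\<gamma> \<rho> < 0")
      case True then have "\<rho> \<in> \<sigma>" using that r unfolding Q_def by blast
      then show ?thesis using w\<sigma> by simp
    next
      case False then show ?thesis using w0[OF r] by simp
    qed
  qed
  have Dlin: "D (\<lambda>\<rho>. \<gamma> \<rho> - c \<rho>) = D \<gamma> - D c" for \<gamma> c
    unfolding D_def by (simp add: left_diff_distrib sum_subtractf)
  have findP: "\<exists>P\<in>Cs. P \<subseteq> {\<rho>\<in>rays. \<gamma> \<rho> > 0}" if Q: "Q \<gamma>" and nz: "\<gamma> \<noteq> (\<lambda>_. 0)" for \<gamma>
  proof -
    define Sp where "Sp = {\<rho>\<in>rays. \<gamma> \<rho> > 0}"
    define N where "N = {\<rho>\<in>rays. \<gamma> \<rho> < 0}"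
    have cc: "curve_class rays \<gamma>" using Q unfolding Q_def by (rule conjunct1)
    have "\<forall>\<rho>\<in>rays. \<gamma> \<rho> < 0 \<longrightarrow> \<rho> \<in> \<sigma>" using Q unfolding Q_def by (rule conjunct2)
    then have "N \<subseteq> \<sigma>" unfolding N_def by blast
    then have Nc: "N \<in> cones" by (rule F(4)[OF \<sigma>c])
    have fSp: "finite Sp" and fN: "finite N" using F(1) unfolding Sp_def N_def by auto
    have notc: "Sp \<notin> cones"
    proof
      assume Spc: "Sp \<in> cones"
      have rel: "(\<Sum>\<rho>\<in>rays. real_of_int (\<gamma> \<rho>) *\<^sub>R rv \<rho>) = 0"
      proof -
        have "(\<Sum>\<rho>\<in>rays. real_of_int (\<gamma> \<rho>) *\<^sub>R rv \<rho>) = rv (\<Sum>\<rho>\<in>rays. \<gamma> \<rho> *s \<rho>)" by (simp add: rv_lincomb)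
        also have "(\<Sum>\<rho>\<in>rays. \<gamma> \<rho> *s \<rho>) = 0" using cc unfolding curve_class_def by blast
        finally show ?thesis by simp
      qed
      have spl: "real_of_int (\<gamma> \<rho>) *\<^sub>R rv \<rho> = (if \<rho> \<in> Sp then real_of_int (\<gamma> \<rho>) *\<^sub>R rv \<rho> else 0)
          + (if \<rho> \<in> N then real_of_int (\<gamma> \<rho>) *\<^sub>R rv \<rho> else 0)" if "\<rho> \<in> rays" for \<rho>
        using that unfolding Sp_def N_def by auto
      have s1: "(\<Sum>\<rho>\<in>rays. if \<rho> \<in> Sp then real_of_int (\<gamma> \<rho>) *\<^sub>R rv \<rho> else 0) = (\<Sum>\<rho>\<in>Sp. real_of_int (\<gamma> \<rho>) *\<^sub>R rv \<rho>)"
        by (rule sum_if_sub[OF F(1)]) (auto simp: Sp_def)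
      have s2: "(\<Sum>\<rho>\<in>rays. if \<rho> \<in> N then real_of_int (\<gamma> \<rho>) *\<^sub>R rv \<rho> else 0) = (\<Sum>\<rho>\<in>N. real_of_int (\<gamma> \<rho>) *\<^sub>R rv \<rho>)"
        by (rule sum_if_sub[OF F(1)]) (auto simp: N_def)
      have "(\<Sum>\<rho>\<in>rays. real_of_int (\<gamma> \<rho>) *\<^sub>R rv \<rho>) = (\<Sum>\<rho>\<in>rays. (if \<rho> \<in> Sp then real_of_int (\<gamma> \<rho>) *\<^sub>R rv \<rho> else 0)
          + (if \<rho> \<in> N then real_of_int (\<gamma> \<rho>) *\<^sub>R rv \<rho> else 0))"
        using spl by (rule sum.cong[OF refl])
      also have "\<dots> = (\<Sum>\<rho>\<in>Sp. real_of_int (\<gamma> \<rho>) *\<^sub>R rv \<rho>) + (\<Sum>\<rho>\<in>N. real_of_int (\<gamma> \<rho>) *\<^sub>R rv \<rho>)"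
        unfolding sum.distrib s1 s2 by (rule refl)
      finally have e: "(\<Sum>\<rho>\<in>Sp. real_of_int (\<gamma> \<rho>) *\<^sub>R rv \<rho>) = (\<Sum>\<rho>\<in>N. (- real_of_int (\<gamma> \<rho>)) *\<^sub>R rv \<rho>)"
        using rel by (simp add: sum_negf eq_neg_iff_add_eq_0)
      define y where "y = (\<Sum>\<rho>\<in>Sp. real_of_int (\<gamma> \<rho>) *\<^sub>R rv \<rho>)"
      have "y \<in> poscone Sp" unfolding poscone_def y_def
        by (intro CollectI exI[of _ "\<lambda>\<rho>. real_of_int (\<gamma> \<rho>)"] conjI refl) (auto simp: Sp_def)
      moreover have "y \<in> poscone N" unfolding poscone_def y_def e
        by (intro CollectI exI[of _ "\<lambda>\<rho>. - real_of_int (\<gamma> \<rho>)"] conjI refl) (auto simp: N_def)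
      ultimately have "y \<in> poscone (Sp \<inter> N)" using F(5)[OF Spc Nc] by blast
      moreover have "Sp \<inter> N = {}" unfolding Sp_def N_def by auto
      ultimately have y0: "y = 0" unfolding poscone_def by simp
      have z1: "(\<Sum>\<rho>\<in>Sp. real_of_int (\<gamma> \<rho>) *\<^sub>R rv \<rho>) = (\<Sum>\<rho>\<in>Sp. 0 *\<^sub>R rv \<rho>)" using y0 y_def by simp
      have z2: "(\<Sum>\<rho>\<in>N. (- real_of_int (\<gamma> \<rho>)) *\<^sub>R rv \<rho>) = (\<Sum>\<rho>\<in>N. 0 *\<^sub>R rv \<rho>)" using y0 y_def e by simp
      have "\<gamma> \<rho> = 0" for \<rho>
      proof (cases "\<rho> \<in> rays")
        case False then show ?thesis using cc unfolding curve_class_def by blast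
      next
        case True
        show ?thesis
        proof (rule ccontr)
          assume ne: "\<gamma> \<rho> \<noteq> 0"
          show False
          proof (cases "\<gamma> \<rho> > 0")
            case True
            then have "\<rho> \<in> Sp" using \<open>\<rho> \<in> rays\<close> Sp_def by simp
            from cone_uniq[OF spf Spc z1 this] True show False by simp
          next
            case False
            then have "\<rho> \<in> N" using \<open>\<rho> \<in> rays\<close> ne N_def by simp
            from cone_uniq[OF spf Nc z2 this] ne show False by simp
          qed
        qed
      qed
      then show False using nz by auto
    qed
    define X where "X = {P. P \<subseteq> Sp \<and> P \<notin> cones}"
    have "Sp \<in> X" using notc X_def by simp
    then have ex: "\<exists>k. \<exists>P\<in>X. card P = k" by blast
    define k0 where "k0 = (LEAST k. \<exists>P\<in>X. card P = k)"
    obtain P where P: "P \<in> X" "card P = k0" using LeastI_ex[OF ex] k0_def by blast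
    have "P \<in> Cs" unfolding Cs_def primitive_set_def
    proof (intro CollectI conjI allI impI)
      show "P \<subseteq> rays" using P(1) X_def Sp_def by auto
      show "P \<notin> cones" using P(1) X_def by simp
      fix R assume R: "R \<subset> P"
      show "R \<in> cones"
      proof (rule ccontr)
        assume "R \<notin> cones"
        then have "R \<in> X" using R P(1) X_def by auto
        moreover have "finite P" using P(1) fSp X_def finite_subset by blast
        then have "card R < k0" using R P(2) psubset_card_mono by blast
        ultimately show False using not_less_Least k0_def by blast
      qed
    qed
    moreover have "P \<subseteq> {\<rho>\<in>rays. \<gamma> \<rho> > 0}" using P(1) X_def Sp_def by simp
    ultimately show ?thesis by blast
  qed
  have stepQ: "Q (\<lambda>\<rho>. \<gamma> \<rho> - pc P \<rho>)" if Q: "Q \<gamma>" and PC: "P \<in> Cs" and Psub: "P \<subseteq> {\<rho>\<in>rays. \<gamma> \<rho> > 0}" for \<gamma> P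
  proof -
    define c where "c = pc P"
    have pcl: "primitive_class rays cones P c" using pcC[OF PC] c_def by simp
    then have cc: "curve_class rays c" unfolding primitive_class_def by blast
    obtain \<tau> a where ta: "\<tau> \<in> cones" "\<forall>v\<in>\<tau>. a v > 0" "\<forall>v\<in>P. c v = 1"
      "\<forall>v\<in>\<tau>. real_of_int (c v) = - a v" "\<forall>v\<in>rays - P - \<tau>. c v = 0"
      using pcl unfolding primitive_class_def by blast
    have cg: "curve_class rays \<gamma>" using Q unfolding Q_def by (rule conjunct1)
    have "curve_class rays (\<lambda>\<rho>. \<gamma> \<rho> - c \<rho>)" unfolding curve_class_def
    proof (intro conjI allI impI)
      fix v assume "v \<notin> rays" then show "\<gamma> v - c v = 0" using cc cg unfolding curve_class_def by simp
    next
      have "(\<Sum>\<rho>\<in>rays. (\<gamma> \<rho> - c \<rho>) *s \<rho>) = (\<Sum>\<rho>\<in>rays. \<gamma> \<rho> *s \<rho>) - (\<Sum>\<rho>\<in>rays. c \<rho> *s \<rho>)"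
        by (simp add: vector_sub_rdistrib sum_subtractf)
      then show "(\<Sum>\<rho>\<in>rays. (\<gamma> \<rho> - c \<rho>) *s \<rho>) = 0" using cc cg unfolding curve_class_def by simp
    qed
    moreover have "\<rho> \<in> \<sigma>" if r: "\<rho> \<in> rays" and neg: "\<gamma> \<rho> - c \<rho> < 0" for \<rho>
    proof (cases "\<rho> \<in> P")
      case True
      then have "\<gamma> \<rho> > 0" "c \<rho> = 1" using Psub ta(3) by auto
      then show ?thesis using neg by simp
    next
      case False
      have "c \<rho> \<le> 0"
      proof (cases "\<rho> \<in> \<tau>")
        case True
        then have "real_of_int (c \<rho>) < 0" using ta(2,4) by force
        then show ?thesis by simp
      next
        case False then show ?thesis using ta(5) r \<open>\<rho> \<notin> P\<close> by simp
      qed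
      then have "\<gamma> \<rho> < 0" using neg by simp
      then show ?thesis using Q r unfolding Q_def by blast
    qed
    ultimately show ?thesis unfolding Q_def c_def by blast
  qed
  have ind: "\<forall>\<gamma>. Q \<gamma> \<and> D \<gamma> < real K * \<delta> \<longrightarrow> (\<exists>k. \<gamma> = (\<lambda>\<rho>. \<Sum>c\<in>C0. int (k c) * c \<rho>))" for K
  proof (induction K)
    case 0
    then show ?case using Dnn by (metis mult_zero_left not_less of_nat_0)
  next
    case (Suc K)
    show ?case
    proof (intro allI impI)
      fix \<gamma> assume g: "Q \<gamma> \<and> D \<gamma> < real (Suc K) * \<delta>"
      show "\<exists>k. \<gamma> = (\<lambda>\<rho>. \<Sum>c\<in>C0. int (k c) * c \<rho>)"
      proof (cases "\<gamma> = (\<lambda>_. 0)")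
        case True
        then show ?thesis by (intro exI[of _ "\<lambda>_. 0"]) simp
      next
        case False
        obtain P where P: "P \<in> Cs" "P \<subseteq> {\<rho>\<in>rays. \<gamma> \<rho> > 0}" using findP g False by blast
        define c where "c = pc P"
        have cC: "c \<in> C0" using P(1) c_def C0_def by blast
        define \<gamma>' where "\<gamma>' = (\<lambda>\<rho>. \<gamma> \<rho> - c \<rho>)"
        have Q': "Q \<gamma>'" using stepQ[of \<gamma> P] g P unfolding \<gamma>'_def c_def by blast
        have "D \<gamma>' = D \<gamma> - D c" unfolding \<gamma>'_def by (rule Dlin)
        also have "\<dots> \<le> D \<gamma> - \<delta>" using \<delta>le[OF cC] by simp
        also have "\<dots> < real K * \<delta>" using g by (simp add: distrib_right)
        finally have "D \<gamma>' < real K * \<delta>" .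
        then obtain k' where k': "\<gamma>' = (\<lambda>\<rho>. \<Sum>d\<in>C0. int (k' d) * d \<rho>)" using Suc.IH Q' by blast
        define k where "k = k'(c := Suc (k' c))"
        have "\<gamma> \<rho> = (\<Sum>d\<in>C0. int (k d) * d \<rho>)" for \<rho>
        proof -
          have kk: "int (k d) * d \<rho> = int (k' d) * d \<rho> + (if d = c then c \<rho> else 0)" for d
            unfolding k_def by (cases "d = c") (simp_all add: distrib_right)
          have "(\<Sum>d\<in>C0. int (k d) * d \<rho>) = (\<Sum>d\<in>C0. int (k' d) * d \<rho>) + (\<Sum>d\<in>C0. if d = c then c \<rho> else 0)"
            unfolding kk by (rule sum.distrib)
          also have "(\<Sum>d\<in>C0. if d = c then c \<rho> else 0) = c \<rho>" using finC0 cC by (simp add: sum.delta')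
          also have "(\<Sum>d\<in>C0. int (k' d) * d \<rho>) = \<gamma>' \<rho>" using k' by simp
          finally show ?thesis unfolding \<gamma>'_def by simp
        qed
        then show ?thesis by blast
      qed
    qed
  qed
  have Q\<beta>: "Q \<beta>" unfolding Q_def \<sigma>_def using assms(2) by auto
  define K where "K = nat \<lceil>D \<beta> / \<delta>\<rceil> + 1"
  have "D \<beta> / \<delta> < real K" unfolding K_def by linarith
  then have "D \<beta> < real K * \<delta>" using \<delta>pos by (simp add: divide_less_eq)
  then obtain k where "\<beta> = (\<lambda>\<rho>. \<Sum>c\<in>C0. int (k c) * c \<rho>)" using ind Q\<beta> by blast
  then show ?thesis using finC0 C0prim by blast
qed

end
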